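(* Fix a channel $c$, observations $\mathcal{X}$, and a finite query set $\mathcal{Q}_c=(q_1,\dots,q_{n})$ with $q_i=(t_i,c)$ and targets $\mathbf{y}_c=(y_1,\dots,y_n)$. For a mixture component $k$, define the leaf density $$p_{c,k}(\mathbf{y}_c\mid\mathcal{Q}_c,\mathcal{X})=\Big(\prod_{i=1}^n f(y_i;\theta_i^k)\Big)\, |R|^{-1/2}\exp\!\Big(-\tfrac12\mathbf{z}^\top(R^{-1}-I)\mathbf{z}\Big),\qquad z_i=\Phi^{-1}\big(F(y_i;\theta_i^k)\big),$$ where $R=R^{c,k}\in\mathbb{R}^{n\times n}$ has entries $R_{ij}=\mathbf{v}_i^\top\mathbf{v}_j/H$ for $i\neq j$ and $R_{ii}=1$, with $\mathbf{v}_i=\tanh(g(\mathbf{e}_i^k))\in\mathbb{R}^H$. Here $\mathbf{e}_i=\mathrm{Proj}([\phi(t_i)\,\|\,\tilde{\mathbf{h}}_c])$, $\mathbf{e}_i^k$ is the $k$-th block of $\mathbf{e}_i$, $\tilde{\mathbf{h}}_c$ is a vector computed from $\mathcal{X}$ alone, and the flow parameters $\theta_i^k$ are a function of $\mathbf{e}_i^k$. Then this leaf distribution is marginalization consistent: for every index $m\in\{1,\dots,n\}$, $$\int p_{c,k}(\mathbf{y}_c\mid\mathcal{Q}_c,\mathcal{X})\,dy_m=p_{c,k}(\mathbf{y}_{c\setminus m}\mid\mathcal{Q}_{c\setminus m},\mathcal{X}),$$ where $\mathcal{Q}_{c\setminus m}$ and $\mathbf{y}_{c\setminus m}$ denote $\mathcal{Q}_c$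 and $\mathbf{y}_c$ with the $m$-th entry removed; consequently (by induction) consistency holds for removing any subset of the variables of the channel.
   Context: $\Phi$ is the standard normal CDF. $F(\cdot;\theta)$ is a Deep Sigmoidal Flow: $F=f_L\circ\cdots\circ f_1$ with $f_l(x)=\sigma(A_lx+b_l)$, $\sigma$ the sigmoid, all entries of the $A_l$ strictly positive, so $F(\cdot;\theta)$ is a strictly increasing differentiable CDF with values in $(0,1)$; $f(y;\theta)=\partial F(y;\theta)/\partial y$ is its density. $\phi$ is a fixed (sinusoidal) time embedding, $\mathrm{Proj}$ a fixed linear map, $g$ a fixed MLP, $H$ a positive integer, $\mathbf{e}_i\in\mathbb{R}^D$ with $D=KD'$ split into $K$ blocks $\mathbf{e}_i^k\in\mathbb{R}^{D'}$. The second factor is the Gaussian copula density with correlation matrix $R$. *)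

theory Defs
  imports "HOL-Probability.Probability" "Jordan_Normal_Form.Gauss_Jordan_Elimination"
    "Jordan_Normal_Form.Determinant"
begin

definition Phi :: "real \<Rightarrow> real" where
  "Phi x = (LINT t:{..x}|lborel. std_normal_density t)"

definition Phi_inv :: "real \<Rightarrow> real" where
  "Phi_inv = inv_into UNIV Phi"

definition del_nth :: "nat \<Rightarrow> 'a list \<Rightarrow> 'a list" where
  "del_nth m xs = take m xs @ drop (Suc m) xs"

definition corr_mat :: "nat \<Rightarrow> real vec list \<Rightarrow> real mat" where
  "corr_mat H vs = mat (length vs) (length vs)
     (\<lambda>(i,j). if i = j then 1 else scalar_prod (vs ! i) (vs ! j) / real H)"

definition gauss_copula_density :: "real mat \<Rightarrow> real list \<Rightarrow> real" where
  "gauss_copula_density R zs =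
     (let z = vec_of_list zs; n = length zs in
      Determinant.det R powr (-1/2) *
      exp (- (1/2) * scalar_prod z ((the (mat_inverse R) - 1\<^sub>m n) *\<^sub>v z)))"

text \<open>Leaf density given per-query flow parameters, per-query vectors v_i, and targets y_i.
  F y th is the flow CDF with parameters th, f y th its density.\<close>
definition leaf_density ::
  "(real \<Rightarrow> 'p \<Rightarrow> real) \<Rightarrow> (real \<Rightarrow> 'p \<Rightarrow> real) \<Rightarrow> nat \<Rightarrow> 'p list \<Rightarrow> real vec list
    \<Rightarrow> real list \<Rightarrow> real" where
  "leaf_density F f H ths vs ys =
     (\<Prod>i<length ys. f (ys ! i) (ths ! i)) *
     gauss_copula_density (corr_mat H vs) (map2 (\<lambda>y th. Phi_inv (F y th)) ys ths)"

definition emb_block ::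
  "(real vec \<Rightarrow> real vec) \<Rightarrow> (real \<Rightarrow> real vec) \<Rightarrow> real vec \<Rightarrow> nat \<Rightarrow> nat \<Rightarrow> real \<Rightarrow> real vec" where
  "emb_block Proj phi htilde D' k t = vec D' (\<lambda>j. Proj (phi t @\<^sub>v htilde) $ (k * D' + j))"

text \<open>The leaf density p_{c,k}(y_c | Q_c, X) for query times ts (channel c fixed) and targets ys.
  theta maps the block embedding to flow parameters, g is the fixed MLP, v_i = tanh(g(e_i^k)).\<close>
definition p_leaf ::
  "(real \<Rightarrow> 'p \<Rightarrow> real) \<Rightarrow> (real \<Rightarrow> 'p \<Rightarrow> real) \<Rightarrow> (real vec \<Rightarrow> 'p) \<Rightarrow> (real vec \<Rightarrow> real vec)
   \<Rightarrow> nat \<Rightarrow> (real vec \<Rightarrow> real vec) \<Rightarrow> (real \<Rightarrow> real vec) \<Rightarrow> real vec \<Rightarrow> nat \<Rightarrow> nat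
   \<Rightarrow> real list \<Rightarrow> real list \<Rightarrow> real" where
  "p_leaf F f theta g H Proj phi htilde D' k ts ys =
     (let es = map (emb_block Proj phi htilde D' k) ts in
      leaf_density F f H (map theta es) (map (\<lambda>e. map_vec tanh (g e)) es) ys)"

end

theory Submission
  imports Defs
begin


lemma phi_integrable: "integrable lborel std_normal_density"
  using integrable_std_normal_moment[of 0] by simp

definition NM :: "real measure" where "NM = density lborel (\<lambda>x. ennreal (std_normal_density x))"

lemma NM_real_distribution: "real_distribution NM"
  unfolding real_distribution_def NM_def
  using prob_space_normal_density[of 1 0] by (auto simp: real_distribution_axioms_def)

lemma Phi_cdf: "Phi x = cdf NM x"
proof -
  have "cdf NM x = measure NM {..x}" by (simp add: cdf_def)
  also have "\<dots> = enn2real (emeasure NM {..x})" by (simp add: measure_def)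
  also have "emeasure NM {..x} = (\<integral>\<^sup>+t. ennreal (std_normal_density t) * indicator {..x} t \<partial>lborel)"
    unfolding NM_def by (subst emeasure_density) auto
  also have "\<dots> = (\<integral>\<^sup>+t. ennreal (indicator {..x} t *\<^sub>R std_normal_density t) \<partial>lborel)"
    by (intro nn_integral_cong) (auto simp: indicator_def)
  also have "enn2real \<dots> = (LINT t:{..x}|lborel. std_normal_density t)"
    unfolding set_lebesgue_integral_def
    by (rule enn2real_nn_integral_eq_integral) auto
  finally show ?thesis by (simp add: Phi_def)
qed

lemma Phi_split:
  assumes "a \<le> u"
  shows "Phi u = Phi a + (LBINT y=a..u. std_normal_density y)"
proof -
  have si: "set_integrable lborel A std_normal_density" if "A \<in> sets borel" for A
    unfolding set_integrable_def using that
    by (intro integrable_mult_indicator phi_integrable) auto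
  have "{..u} = {..a} \<union> {a<..u}" using assms by auto
  hence "Phi u = (LINT t:({..a} \<union> {a<..u})|lborel. std_normal_density t)" by (simp add: Phi_def)
  also have "\<dots> = Phi a + (LINT t:{a<..u}|lborel. std_normal_density t)"
    unfolding Phi_def by (rule set_integral_Un) (auto intro!: si)
  also have "(LINT t:{a<..u}|lborel. std_normal_density t) = (LBINT y=a..u. std_normal_density y)"
    using assms by (simp add: interval_integral_Ioc)
  finally show ?thesis .
qed

lemma Phi_deriv: "(Phi has_real_derivative std_normal_density x) (at x)"
proof -
  let ?a = "x - 1" and ?b = "x + 1"
  have c: "continuous_on {?a..?b} std_normal_density"
    by (auto intro!: continuous_intros simp: std_normal_density_def)
  have "((\<lambda>u. LBINT y=?a..u. std_normal_density y) has_vector_derivative std_normal_density x) (at x within {?a..?b})"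
    by (rule interval_integral_FTC2[OF _ _ c]) auto
  hence "((\<lambda>u. LBINT y=?a..u. std_normal_density y) has_vector_derivative std_normal_density x) (at x within {?a<..<?b})"
    by (rule has_vector_derivative_within_subset) auto
  hence "((\<lambda>u. LBINT y=?a..u. std_normal_density y) has_vector_derivative std_normal_density x) (at x)"
    by (subst (asm) at_within_open) auto
  hence d: "((\<lambda>u. Phi ?a + (LBINT y=?a..u. std_normal_density y)) has_real_derivative std_normal_density x) (at x)"
    by (auto intro!: derivative_eq_intros simp: has_real_derivative_iff_has_vector_derivative)
  show ?thesis
    by (rule has_field_derivative_transform_within_open[OF d, of "{?a<..}"]) (auto intro!: Phi_split[symmetric])
qed


lemma phi_pos: "0 < std_normal_density x"
  by (simp add: std_normal_density_def)

lemma Phi_strict: "x < y \<Longrightarrow> Phi x < Phi y"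
  by (rule DERIV_pos_imp_increasing[of x y Phi]) (auto intro!: exI[of _ "std_normal_density _"] Phi_deriv phi_pos)

lemma Phi_isCont: "isCont Phi x"
  by (rule DERIV_isCont[OF Phi_deriv])

lemma Phi_top: "(Phi \<longlongrightarrow> 1) at_top"
  using real_distribution.cdf_lim_at_top_prob[OF NM_real_distribution] by (simp add: Phi_cdf[abs_def])

lemma Phi_bot: "(Phi \<longlongrightarrow> 0) at_bot"
  using finite_borel_measure.cdf_lim_at_bot[OF real_distribution.finite_borel_measure_M[OF NM_real_distribution]]
  by (simp add: Phi_cdf[abs_def])

lemma Phi_range: "0 < Phi x \<and> Phi x < 1"
proof
  have "0 \<le> Phi (x - 1)"
    using finite_borel_measure.cdf_nonneg[OF real_distribution.finite_borel_measure_M[OF NM_real_distribution]]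
    by (simp add: Phi_cdf)
  also have "\<dots> < Phi x" by (rule Phi_strict) simp
  finally show "0 < Phi x" .
  have "Phi x < Phi (x + 1)" by (rule Phi_strict) simp
  also have "\<dots> \<le> 1" using real_distribution.cdf_bounded_prob[OF NM_real_distribution] by (simp add: Phi_cdf)
  finally show "Phi x < 1" .
qed

lemma Phi_le: "x \<le> y \<Longrightarrow> Phi x \<le> Phi y"
  using Phi_strict[of x y] by (cases "x = y") auto

lemma Phi_inj: "inj Phi"
  by (metis Phi_strict injI linorder_neqE_linordered_idom order_less_irrefl)

lemma Phi_inv_Phi[simp]: "Phi_inv (Phi x) = x"
  unfolding Phi_inv_def by (rule inv_into_f_f[OF Phi_inj]) simp

lemma Phi_surj: assumes "0 < u" "u < 1" shows "u \<in> range Phi"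
proof -
  from Phi_bot assms(1) have "\<forall>\<^sub>F x in at_bot. Phi x < u" by (rule order_tendstoD)
  then obtain a where a: "Phi a < u" by (meson eventually_at_bot_linorder order_refl)
  from Phi_top assms(2) have "\<forall>\<^sub>F x in at_top. Phi x > u" by (rule order_tendstoD)
  then obtain b0 where b0: "\<And>x. x \<ge> b0 \<Longrightarrow> Phi x > u" by (meson eventually_at_top_linorder)
  define b where "b = max a b0"
  have b: "Phi b > u" "a \<le> b" using b0 by (auto simp: b_def)
  from IVT[of Phi a u b] a b Phi_isCont obtain x where "Phi x = u" by auto
  thus ?thesis by auto
qed

lemma Phi_Phi_inv: assumes "0 < u" "u < 1" shows "Phi (Phi_inv u) = u"
  unfolding Phi_inv_def by (rule f_inv_into_f[OF Phi_surj[OF assms]])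

lemma Phi_inv_less: assumes "0 < u" "u < 1" "u < Phi b" shows "Phi_inv u < b"
proof (rule ccontr)
  assume "\<not> Phi_inv u < b"
  hence "Phi b \<le> Phi (Phi_inv u)" by (intro Phi_le) simp
  with assms show False by (simp add: Phi_Phi_inv)
qed

lemma Phi_inv_greater: assumes "0 < u" "u < 1" "Phi b < u" shows "b < Phi_inv u"
proof (rule ccontr)
  assume "\<not> b < Phi_inv u"
  hence "Phi (Phi_inv u) \<le> Phi b" by (intro Phi_le) simp
  with assms show False by (simp add: Phi_Phi_inv)
qed

lemma Phi_inv_isCont: assumes "0 < u" "u < 1" shows "isCont Phi_inv u"
proof -
  have "isCont Phi_inv (Phi (Phi_inv u))"
    by (rule isCont_inverse_function2[of "Phi_inv u - 1" _ "Phi_inv u + 1"]) (auto intro: Phi_isCont)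
  thus ?thesis using assms by (simp add: Phi_Phi_inv)
qed

lemma Phi_inv_deriv: assumes "0 < u" "u < 1"
  shows "(Phi_inv has_real_derivative inverse (std_normal_density (Phi_inv u))) (at u)"
proof (rule DERIV_inverse_function[where a=0 and b=1])
  show "(Phi has_real_derivative std_normal_density (Phi_inv u)) (at (Phi_inv u))" by (rule Phi_deriv)
qed (use assms phi_pos[of "Phi_inv u"] Phi_Phi_inv Phi_inv_isCont in auto)

lemma Phi_inv_at_bot: "filterlim Phi_inv at_bot (at_right 0)"
  unfolding filterlim_at_bot
proof
  fix Z :: real
  have "Phi Z > 0" using Phi_range by auto
  hence "\<forall>\<^sub>F u in at_right 0. u < Phi Z \<and> 0 < u \<and> u < 1"
    unfolding eventually_at_right_field using Phi_range[of Z]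
    by (intro exI[of _ "min (Phi Z) 1"]) auto
  thus "\<forall>\<^sub>F u in at_right 0. Phi_inv u \<le> Z"
    by eventually_elim (auto intro: less_imp_le Phi_inv_less)
qed


lemma Phi_inv_at_top: "filterlim Phi_inv at_top (at_left 1)"
  unfolding filterlim_at_top
proof
  fix Z :: real
  have "Phi Z < 1" using Phi_range by auto
  hence "\<forall>\<^sub>F u in at_left 1. Phi Z < u \<and> 0 < u \<and> u < 1"
    unfolding eventually_at_left_field using Phi_range[of Z]
    by (intro exI[of _ "max (Phi Z) 0"]) auto
  thus "\<forall>\<^sub>F u in at_left 1. Z \<le> Phi_inv u"
    by eventually_elim (auto intro: less_imp_le Phi_inv_greater)
qed

lemma deriv_nonneg_mono:
  assumes "strict_mono F" "(F has_real_derivative D) (at x)"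
  shows "0 \<le> D"
proof (rule ccontr)
  assume "\<not> 0 \<le> D"
  hence "D < 0" by simp
  from DERIV_neg_dec_right[OF assms(2) this] obtain d where d: "d > 0" "\<forall>h > 0. h < d \<longrightarrow> F x > F (x + h)"
    by blast
  from d(2)[rule_format, of "d/2"] d(1) have "F (x + d/2) < F x" by simp
  moreover have "F x < F (x + d/2)" using strict_monoD[OF assms(1), of x "x + d/2"] d(1) by simp
  ultimately show False by simp
qed

lemma gauss_int:
  fixes F f :: "real \<Rightarrow> real" and a c :: real
  assumes Fd: "\<And>y. (F has_real_derivative f y) (at y)"
    and fc: "continuous_on UNIV f"
    and Fm: "strict_mono F"
    and Fr: "\<And>y. 0 < F y \<and> F y < 1"
    and Fb: "(F \<longlongrightarrow> 0) at_bot"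
    and Ft: "(F \<longlongrightarrow> 1) at_top"
    and a: "0 < a"
  shows "has_bochner_integral lborel
     (\<lambda>y. f y * sqrt a * exp (- (a * (Phi_inv (F y) + c)\<^sup>2 - (Phi_inv (F y))\<^sup>2) / 2)) 1"
proof -
  define Z where "Z y = Phi_inv (F y)" for y
  define g where "g y = f y * sqrt a * exp (- (a * (Z y + c)\<^sup>2 - (Z y)\<^sup>2) / 2)" for y
  define G where "G y = Phi (sqrt a * (Z y + c))" for y
  have Zd: "(Z has_real_derivative f y * inverse (std_normal_density (Z y))) (at y)" for y
    unfolding Z_def using DERIV_chain2[OF Phi_inv_deriv Fd, of y] Fr[of y] by (simp add: mult.commute)
  have Gd: "(G has_real_derivative g y) (at y)" for y
  proof -
    have "(G has_real_derivative std_normal_density (sqrt a * (Z y + c)) * (sqrt a * (f y * inverse (std_normal_density (Z y))))) (at y)"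
      unfolding G_def
      by (rule DERIV_chain2[OF Phi_deriv]) (auto intro!: derivative_eq_intros Zd)
    also have "std_normal_density (sqrt a * (Z y + c)) * (sqrt a * (f y * inverse (std_normal_density (Z y)))) = g y"
    proof -
      have e: "exp (- (a * (Z y + c)\<^sup>2 - (Z y)\<^sup>2) / 2) = exp (- (sqrt a * (Z y + c))\<^sup>2 / 2) / exp (- (Z y)\<^sup>2 / 2)"
        using a by (simp add: exp_diff[symmetric] power_mult_distrib diff_divide_distrib)
      show ?thesis unfolding g_def std_normal_density_def e by (simp add: field_simps)
    qed
    finally show ?thesis .
  qed
  have gc: "isCont g y" for y
  proof -
    have "isCont Z y" by (rule DERIV_isCont[OF Zd])
    moreover have "isCont f y" using fc by (simp add: continuous_on_eq_continuous_at)
    ultimately show ?thesis unfolding g_def by (auto intro!: continuous_intros)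
  qed
  have gnn: "0 \<le> g y" for y
    unfolding g_def using deriv_nonneg_mono[OF Fm Fd[of y]] a by simp
  have Zb: "filterlim Z at_bot at_bot"
    unfolding Z_def
    by (rule filterlim_compose[OF Phi_inv_at_bot]) (auto intro!: tendsto_imp_filterlim_at_right Fb simp: Fr)
  have Zt: "filterlim Z at_top at_top"
    unfolding Z_def
    by (rule filterlim_compose[OF Phi_inv_at_top]) (auto intro!: tendsto_imp_filterlim_at_left Ft simp: Fr)
  have Zcb: "filterlim (\<lambda>y. sqrt a * (Z y + c)) at_bot at_bot"
    apply (rule filterlim_tendsto_pos_mult_at_bot[OF tendsto_const])
    using a apply simp
    using filterlim_tendsto_add_at_bot_iff[OF tendsto_const[of c], of Z at_bot] Zb by (simp add: add.commute)
  have Zct: "filterlim (\<lambda>y. sqrt a * (Z y + c)) at_top at_top"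
    apply (rule filterlim_tendsto_pos_mult_at_top[OF tendsto_const])
    using a apply simp
    using filterlim_tendsto_add_at_top_iff[OF tendsto_const[of c], of Z at_top] Zt by (simp add: add.commute)
  have Gb: "(G \<longlongrightarrow> 0) at_bot"
    unfolding G_def by (rule filterlim_compose[OF Phi_bot Zcb])
  have Gt: "(G \<longlongrightarrow> 1) at_top"
    unfolding G_def by (rule filterlim_compose[OF Phi_top Zct])
  have "set_integrable lborel (einterval (-\<infinity>) \<infinity>) g" "(LBINT x=-\<infinity>..\<infinity>. g x) = 1 - 0"
    by (rule interval_integral_FTC_nonneg[where F=G];
        use Gd gc gnn Gb Gt in \<open>auto simp: ereal_tendsto_simps\<close>)+
  hence "integrable lborel g" "integral\<^sup>L lborel g = 1"
    by (auto simp: set_integrable_def interval_lebesgue_integral_def set_lebesgue_integral_def)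
  thus ?thesis unfolding g_def Z_def by (simp add: has_bochner_integral_iff)
qed



definition qf :: "nat \<Rightarrow> real mat \<Rightarrow> (nat \<Rightarrow> real) \<Rightarrow> real" where
  "qf n A x = (\<Sum>i<n. \<Sum>j<n. x i * A $$ (i,j) * x j)"

definition pd :: "nat \<Rightarrow> real mat \<Rightarrow> bool" where
  "pd n A \<longleftrightarrow> A \<in> carrier_mat n n \<and> (\<forall>i<n. \<forall>j<n. A $$ (i,j) = A $$ (j,i)) \<and>
     (\<forall>x. (\<exists>i<n. x i \<noteq> 0) \<longrightarrow> 0 < qf n A x)"

lemma sum_ins:
  fixes h :: "nat \<Rightarrow> 'a::comm_monoid_add"
  assumes "m < Suc k"
  shows "(\<Sum>i<Suc k. h i) = h m + (\<Sum>i<k. h (insert_index m i))"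
proof -
  have "(\<Sum>i<Suc k. h i) = h m + sum h ({0..<Suc k} - {m})"
    using sum.remove[of "{0..<Suc k}" m h] assms by (simp add: lessThan_atLeast0)
  also have "{0..<Suc k} - {m} = insert_index m ` {0..<k}" using insert_index_image[OF assms] by simp
  also have "sum h \<dots> = (\<Sum>i<k. h (insert_index m i))"
    by (subst sum.reindex[OF insert_index_inj_on]) (simp add: lessThan_atLeast0)
  finally show ?thesis .
qed

lemma prod_ins:
  fixes h :: "nat \<Rightarrow> 'a::comm_monoid_mult"
  assumes "m < Suc k"
  shows "(\<Prod>i<Suc k. h i) = h m * (\<Prod>i<k. h (insert_index m i))"
proof -
  have "(\<Prod>i<Suc k. h i) = h m * prod h ({0..<Suc k} - {m})"
    using prod.remove[of "{0..<Suc k}" m h] assms by (simp add: lessThan_atLeast0)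
  also have "{0..<Suc k} - {m} = insert_index m ` {0..<k}" using insert_index_image[OF assms] by simp
  also have "prod h \<dots> = (\<Prod>i<k. h (insert_index m i))"
    by (subst prod.reindex[OF insert_index_inj_on]) (simp add: lessThan_atLeast0)
  finally show ?thesis .
qed

lemma mult_entry:
  assumes "A \<in> carrier_mat n l" "B \<in> carrier_mat l p" "i < n" "j < p"
  shows "(A * B) $$ (i,j) = (\<Sum>r<l. A $$ (i,r) * B $$ (r,j))"
  using assms by (simp add: scalar_prod_def lessThan_atLeast0)

lemma mult_vec_entry:
  assumes "A \<in> carrier_mat n l" "v \<in> carrier_vec l" "i < n"
  shows "(A *\<^sub>v v) $ i = (\<Sum>r<l. A $$ (i,r) * v $ r)"
  using assms by (simp add: scalar_prod_def lessThan_atLeast0)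

lemma pd_det_nz:
  assumes "pd n A" shows "det A \<noteq> 0"
proof
  assume "det A = 0"
  have A: "A \<in> carrier_mat n n" using assms by (simp add: pd_def)
  from \<open>det A = 0\<close> det_0_iff_vec_prod_zero_field[OF A] obtain v where
    v: "v \<in> carrier_vec n" "v \<noteq> 0\<^sub>v n" "A *\<^sub>v v = 0\<^sub>v n" by auto
  have "\<exists>i<n. v $ i \<noteq> 0"
  proof (rule ccontr)
    assume "\<not> ?thesis"
    hence "v = 0\<^sub>v n" using v(1) by (intro eq_vecI) auto
    with v(2) show False by simp
  qed
  hence "0 < qf n A (\<lambda>i. v $ i)" using assms by (auto simp: pd_def)
  moreover have "qf n A (\<lambda>i. v $ i) = (\<Sum>i<n. v $ i * (A *\<^sub>v v) $ i)"
    unfolding qf_def using A v(1)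
    by (intro sum.cong refl) (simp add: scalar_prod_def lessThan_atLeast0 sum_distrib_left mult.assoc)
  moreover have "(\<Sum>i<n. v $ i * (A *\<^sub>v v) $ i) = 0" using v(3) by simp
  ultimately show False by simp
qed

lemma pd_inv:
  assumes "pd n A"
  obtains P where "mat_inverse A = Some P" "A * P = 1\<^sub>m n" "P * A = 1\<^sub>m n" "P \<in> carrier_mat n n"
proof (cases "mat_inverse A")
  case None
  have A: "A \<in> carrier_mat n n" using assms by (simp add: pd_def)
  have d: "det A \<noteq> 0" by (rule pd_det_nz[OF assms])
  define B where "B = (1 / det A) \<cdot>\<^sub>m adj_mat A"
  have B: "B \<in> carrier_mat n n" using adj_mat(1)[OF A] by (simp add: B_def)
  have "A * B = 1\<^sub>m n"
    unfolding B_def using adj_mat[OF A] A d by (simp add: mult_smult_distrib[OF A adj_mat(1)[OF A]]; intro eq_matI; simp)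
  moreover have "B * A = 1\<^sub>m n"
    unfolding B_def using adj_mat[OF A] A d by (simp add: mult_smult_assoc_mat[OF adj_mat(1)[OF A] A]; intro eq_matI; simp)
  ultimately have "A \<in> Units (ring_mat TYPE(real) n ())"
    using A B unfolding Units_def ring_mat_def by auto
  moreover have "A \<notin> Units (ring_mat TYPE(real) n ())" by (rule mat_inverse(1)[OF A None])
  ultimately show ?thesis by blast
next
  case (Some P)
  have A: "A \<in> carrier_mat n n" using assms by (simp add: pd_def)
  from mat_inverse(2)[OF A Some] Some that show ?thesis by auto
qed


lemma ins_lt: "m < Suc k \<Longrightarrow> i < k \<Longrightarrow> insert_index m i < Suc k"
  by (simp add: insert_index_def)

lemma ins_inj: "insert_index m i = insert_index m j \<longleftrightarrow> i = j"
  by (auto simp: insert_index_def)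

lemma qf_ins:
  assumes "m < Suc k" "y m = 0"
  shows "qf (Suc k) A y = (\<Sum>i<k. \<Sum>j<k. y (insert_index m i) * A $$ (insert_index m i, insert_index m j) * y (insert_index m j))"
  unfolding qf_def sum_ins[OF assms(1)] using assms(2) by simp

lemma pd_delete:
  assumes pd: "pd (Suc k) A" and m: "m < Suc k"
  shows "pd k (mat_delete A m m)"
proof -
  have A: "A \<in> carrier_mat (Suc k) (Suc k)" and sym: "\<forall>i<Suc k. \<forall>j<Suc k. A $$ (i,j) = A $$ (j,i)"
    and pos: "\<And>x. (\<exists>i<Suc k. x i \<noteq> 0) \<Longrightarrow> 0 < qf (Suc k) A x" using pd by (auto simp: pd_def)
  have D: "mat_delete A m m $$ (i,j) = A $$ (insert_index m i, insert_index m j)" if "i < k" "j < k" for i j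
    using mat_delete_index[OF A m m that] by simp
  show ?thesis unfolding pd_def
  proof (intro conjI allI impI)
    show "mat_delete A m m \<in> carrier_mat k k" using mat_delete_carrier[OF A] by simp
    fix i j assume "i < k" "j < k"
    thus "mat_delete A m m $$ (i, j) = mat_delete A m m $$ (j, i)"
      using D sym ins_lt[OF m] by simp
  next
    fix x :: "nat \<Rightarrow> real" assume "\<exists>i<k. x i \<noteq> 0"
    then obtain i where i: "i < k" "x i \<noteq> 0" by auto
    define y where "y j = (if j = m then 0 else x (delete_index m j))" for j
    have yi: "y (insert_index m j) = x j" for j by (simp add: y_def)
    have "\<exists>i<Suc k. y i \<noteq> 0" using i yi ins_lt[OF m] by metis
    from pos[OF this] have q: "0 < qf (Suc k) A y" .
    have ym: "y m = 0" by (simp add: y_def)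
    have "qf (Suc k) A y = (\<Sum>i<k. \<Sum>j<k. y (insert_index m i) * A $$ (insert_index m i, insert_index m j) * y (insert_index m j))"
      using qf_ins[where y=y and m=m and k=k and A=A] m ym by blast
    also have "\<dots> = qf k (mat_delete A m m) x"
      unfolding qf_def yi using D by simp
    finally show "0 < qf k (mat_delete A m m) x" using q by simp
  qed
qed


lemma inv_sym:
  assumes pd: "pd n A" and AP: "A * P = 1\<^sub>m n" and PA: "P * A = 1\<^sub>m n" and P: "P \<in> carrier_mat n n"
    and ij: "i < n" "j < n"
  shows "P $$ (i,j) = P $$ (j,i)"
proof -
  have A: "A \<in> carrier_mat n n" and sym: "\<forall>i<n. \<forall>j<n. A $$ (i,j) = A $$ (j,i)" using pd by (auto simp: pd_def)
  have AT: "transpose_mat A = A" using A sym by (intro eq_matI) auto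
  have "transpose_mat P * A = transpose_mat (A * P)"
    using transpose_mult[OF A P] AT by simp
  also have "\<dots> = 1\<^sub>m n" using AP by simp
  finally have PTA: "transpose_mat P * A = 1\<^sub>m n" .
  have PT: "transpose_mat P \<in> carrier_mat n n" using P by simp
  have "transpose_mat P = transpose_mat P * (A * P)" using AP PT by simp
  also have "\<dots> = (transpose_mat P * A) * P" using PT A P by (simp add: assoc_mult_mat)
  also have "\<dots> = P" using PTA P by simp
  finally have "transpose_mat P = P" .
  hence "transpose_mat P $$ (j,i) = P $$ (j,i)" by simp
  thus ?thesis using P ij by simp
qed

lemma inv_diag_pos:
  assumes pd: "pd n A" and AP: "A * P = 1\<^sub>m n" and P: "P \<in> carrier_mat n n" and m: "m < n"
  shows "0 < P $$ (m,m)"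
proof -
  have A: "A \<in> carrier_mat n n" and pos: "\<And>x. (\<exists>i<n. x i \<noteq> 0) \<Longrightarrow> 0 < qf n A x"
    using pd by (auto simp: pd_def)
  have APe: "(\<Sum>j<n. A $$ (i,j) * P $$ (j,m)) = (if i = m then 1 else 0)" if "i < n" for i
    using mult_entry[OF A P that m] AP that m by simp
  have "\<exists>i<n. P $$ (i,m) \<noteq> 0"
  proof (rule ccontr)
    assume "\<not> ?thesis"
    hence "(\<Sum>j<n. A $$ (m,j) * P $$ (j,m)) = 0" by simp
    with APe[OF m] show False by simp
  qed
  hence "0 < qf n A (\<lambda>i. P $$ (i,m))" by (rule pos)
  also have "qf n A (\<lambda>i. P $$ (i,m)) = (\<Sum>i<n. P $$ (i,m) * (\<Sum>j<n. A $$ (i,j) * P $$ (j,m)))"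
    unfolding qf_def by (simp add: sum_distrib_left mult.assoc)
  also have "\<dots> = (\<Sum>i<n. P $$ (i,m) * (if i = m then 1 else 0))"
    by (intro sum.cong refl) (simp add: APe)
  also have "\<dots> = P $$ (m,m)" using m by (simp add: if_distrib cong: if_cong)
  finally show ?thesis .
qed

lemma inv_det:
  assumes A: "A \<in> carrier_mat (Suc k) (Suc k)" and PA: "P * A = 1\<^sub>m (Suc k)" and P: "P \<in> carrier_mat (Suc k) (Suc k)"
    and m: "m < Suc k"
  shows "det (mat_delete A m m) = det A * P $$ (m,m)"
proof -
  have adj: "adj_mat A \<in> carrier_mat (Suc k) (Suc k)" by (rule adj_mat(1)[OF A])
  have "adj_mat A = (P * A) * adj_mat A" using PA adj by simp
  also have "\<dots> = P * (A * adj_mat A)" using P A adj by (simp add: assoc_mult_mat)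
  also have "\<dots> = P * (det A \<cdot>\<^sub>m 1\<^sub>m (Suc k))" using adj_mat(2)[OF A] by simp
  also have "\<dots> = det A \<cdot>\<^sub>m P" using P mult_smult_distrib[OF P one_carrier_mat[of "Suc k"], of "det A"] by simp
  finally have "adj_mat A $$ (m,m) = (det A \<cdot>\<^sub>m P) $$ (m,m)" by simp
  hence "cofactor A m m = det A * P $$ (m,m)" using A P m by (simp add: adj_mat_def)
  moreover have "cofactor A m m = det (mat_delete A m m)"
    by (simp add: cofactor_def)
  ultimately show ?thesis by simp
qed


definition schurQ :: "real mat \<Rightarrow> nat \<Rightarrow> nat \<Rightarrow> real mat" where
  "schurQ P k m = mat k k (\<lambda>(i,j). P $$ (insert_index m i, insert_index m j)
      - P $$ (insert_index m i, m) * P $$ (m, insert_index m j) / P $$ (m,m))"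

lemma schurQ_left_inv:
  assumes A: "A \<in> carrier_mat (Suc k) (Suc k)" and PA: "P * A = 1\<^sub>m (Suc k)" and P: "P \<in> carrier_mat (Suc k) (Suc k)"
    and m: "m < Suc k" and a: "P $$ (m,m) \<noteq> 0"
  shows "schurQ P k m * mat_delete A m m = 1\<^sub>m k"
proof (rule eq_matI)
  let ?ins = "insert_index m"
  let ?a = "P $$ (m,m)"
  have S: "mat_delete A m m \<in> carrier_mat k k" using mat_delete_carrier[OF A] by simp
  have Q: "schurQ P k m \<in> carrier_mat k k" by (simp add: schurQ_def)
  have D: "mat_delete A m m $$ (i,j) = A $$ (?ins i, ?ins j)" if "i < k" "j < k" for i j
    using mat_delete_index[OF A m m that] by simp
  have PAe: "P $$ (r,m) * A $$ (m,c) + (\<Sum>l<k. P $$ (r, ?ins l) * A $$ (?ins l, c)) = (if r = c then 1 else 0)"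
    if "r < Suc k" "c < Suc k" for r c
  proof -
    have "(if r = c then 1 else 0) = (P * A) $$ (r,c)" using PA that by simp
    also have "\<dots> = (\<Sum>l<Suc k. P $$ (r,l) * A $$ (l,c))" by (rule mult_entry[OF P A that])
    also have "\<dots> = P $$ (r,m) * A $$ (m,c) + (\<Sum>l<k. P $$ (r, ?ins l) * A $$ (?ins l, c))"
      by (rule sum_ins[OF m])
    finally show ?thesis by simp
  qed
  fix i j assume i: "i < dim_row (1\<^sub>m k)" and j: "j < dim_col (1\<^sub>m k)"
  hence i: "i < k" and j: "j < k" by auto
  have ii: "?ins i < Suc k" and jj: "?ins j < Suc k" using i j m by (auto intro: ins_lt)
  have jm: "?ins j \<noteq> m" by simp
  have e1: "(\<Sum>l<k. P $$ (?ins i, ?ins l) * A $$ (?ins l, ?ins j)) = (if i = j then 1 else 0) - P $$ (?ins i, m) * A $$ (m, ?ins j)"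
    using PAe[OF ii jj] by (simp add: ins_inj)
  have e2: "(\<Sum>l<k. P $$ (m, ?ins l) * A $$ (?ins l, ?ins j)) = - ?a * A $$ (m, ?ins j)"
    using PAe[OF m jj] jm by (simp add: eq_neg_iff_add_eq_0)
  have "(schurQ P k m * mat_delete A m m) $$ (i,j)
      = (\<Sum>l<k. (P $$ (?ins i, ?ins l) - P $$ (?ins i, m) * P $$ (m, ?ins l) / ?a) * A $$ (?ins l, ?ins j))"
    using mult_entry[OF Q S i j] i j by (simp add: schurQ_def D)
  also have "\<dots> = (\<Sum>l<k. P $$ (?ins i, ?ins l) * A $$ (?ins l, ?ins j))
       - P $$ (?ins i, m) / ?a * (\<Sum>l<k. P $$ (m, ?ins l) * A $$ (?ins l, ?ins j))"
    by (simp add: sum_subtractf sum_distrib_left algebra_simps)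
  also have "\<dots> = (if i = j then 1 else 0)" unfolding e1 e2 using a by simp
  finally show "(schurQ P k m * mat_delete A m m) $$ (i,j) = 1\<^sub>m k $$ (i,j)" using i j by simp
next
  show "dim_row (schurQ P k m * mat_delete A m m) = dim_row (1\<^sub>m k)" by (simp add: schurQ_def)
  show "dim_col (schurQ P k m * mat_delete A m m) = dim_col (1\<^sub>m k)" using A by simp
qed

lemma schurQ_inverse:
  assumes pd: "pd (Suc k) A" and PA: "P * A = 1\<^sub>m (Suc k)" and P: "P \<in> carrier_mat (Suc k) (Suc k)"
    and m: "m < Suc k" and a: "P $$ (m,m) \<noteq> 0"
  shows "mat_inverse (mat_delete A m m) = Some (schurQ P k m)"
proof -
  have A: "A \<in> carrier_mat (Suc k) (Suc k)" using pd by (simp add: pd_def)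
  have S: "mat_delete A m m \<in> carrier_mat k k" using mat_delete_carrier[OF A] by simp
  have Q: "schurQ P k m \<in> carrier_mat k k" by (simp add: schurQ_def)
  obtain P' where P': "mat_inverse (mat_delete A m m) = Some P'" "mat_delete A m m * P' = 1\<^sub>m k" "P' \<in> carrier_mat k k"
    using pd_inv[OF pd_delete[OF pd m]] by metis
  have "schurQ P k m = schurQ P k m * (mat_delete A m m * P')" using P' Q by simp
  also have "\<dots> = (schurQ P k m * mat_delete A m m) * P'" using Q S P' by (simp add: assoc_mult_mat)
  also have "\<dots> = P'" using schurQ_left_inv[OF A PA P m a] P' by simp
  finally show ?thesis using P' by simp
qed


lemma qf_schur:
  assumes Psym: "\<And>i j. i < Suc k \<Longrightarrow> j < Suc k \<Longrightarrow> P $$ (i,j) = P $$ (j,i)"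
    and m: "m < Suc k" and a: "P $$ (m,m) \<noteq> 0"
  shows "qf (Suc k) P z = P $$ (m,m) * (z m + (\<Sum>j<k. P $$ (m, insert_index m j) * z (insert_index m j)) / P $$ (m,m))\<^sup>2
           + qf k (schurQ P k m) (\<lambda>i. z (insert_index m i))"
proof -
  let ?ins = "insert_index m"
  let ?a = "P $$ (m,m)"
  define b where "b = (\<Sum>j<k. P $$ (m, ?ins j) * z (?ins j))"
  define T where "T = (\<Sum>i<k. \<Sum>j<k. z (?ins i) * P $$ (?ins i, ?ins j) * z (?ins j))"
  have b': "(\<Sum>i<k. z (?ins i) * P $$ (?ins i, m)) = b"
    unfolding b_def using Psym m by (intro sum.cong refl) (simp add: ins_lt)
  have "qf (Suc k) P z = (z m * ?a * z m + (\<Sum>j<k. z m * P $$ (m, ?ins j) * z (?ins j)))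
       + (\<Sum>i<k. z (?ins i) * P $$ (?ins i, m) * z m + (\<Sum>j<k. z (?ins i) * P $$ (?ins i, ?ins j) * z (?ins j)))"
    unfolding qf_def sum_ins[OF m] ..
  also have "\<dots> = ?a * (z m)\<^sup>2 + z m * b + z m * (\<Sum>i<k. z (?ins i) * P $$ (?ins i, m)) + T"
    unfolding b_def T_def
    by (simp add: sum.distrib sum_distrib_left sum_distrib_right power2_eq_square algebra_simps)
  also have "\<dots> = ?a * (z m)\<^sup>2 + 2 * z m * b + T" unfolding b' by simp
  finally have e1: "qf (Suc k) P z = ?a * (z m)\<^sup>2 + 2 * z m * b + T" .
  have "qf k (schurQ P k m) (\<lambda>i. z (?ins i))
      = (\<Sum>i<k. \<Sum>j<k. z (?ins i) * (P $$ (?ins i, ?ins j) - P $$ (?ins i, m) * P $$ (m, ?ins j) / ?a) * z (?ins j))"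
    unfolding qf_def schurQ_def by simp
  also have "\<dots> = T - (\<Sum>i<k. z (?ins i) * P $$ (?ins i, m)) * b / ?a"
    unfolding T_def b_def
    by (simp add: sum_subtractf sum_distrib_left sum_distrib_right algebra_simps sum_divide_distrib)
  finally have e2: "qf k (schurQ P k m) (\<lambda>i. z (?ins i)) = T - b * b / ?a" unfolding b' .
  show ?thesis unfolding e1 e2 b_def[symmetric] using a
    by (simp add: field_simps power2_eq_square)
qed

lemma pd_det_pos: "pd n A \<Longrightarrow> 0 < det A"
proof (induction n arbitrary: A)
  case 0
  hence A: "A \<in> carrier_mat 0 0" by (simp add: pd_def)
  hence "A = 1\<^sub>m 0" by (intro eq_matI) auto
  thus ?case by simp
next
  case (Suc k)
  have A: "A \<in> carrier_mat (Suc k) (Suc k)" using Suc.prems by (simp add: pd_def)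
  obtain P where P: "A * P = 1\<^sub>m (Suc k)" "P * A = 1\<^sub>m (Suc k)" "P \<in> carrier_mat (Suc k) (Suc k)"
    using pd_inv[OF Suc.prems] by metis
  have a: "0 < P $$ (0,0)" by (rule inv_diag_pos[OF Suc.prems P(1) P(3)]) simp
  have "0 < det (mat_delete A 0 0)" by (rule Suc.IH[OF pd_delete[OF Suc.prems]]) simp
  also have "det (mat_delete A 0 0) = det A * P $$ (0,0)" by (rule inv_det[OF A P(2) P(3)]) simp
  finally show ?case using a by (simp add: zero_less_mult_iff)
qed


lemma sp_qf:
  assumes M: "M \<in> carrier_mat n n" and l: "length zs = n"
  shows "scalar_prod (vec_of_list zs) (M *\<^sub>v vec_of_list zs) = qf n M (\<lambda>i. zs ! i)"
proof -
  have v: "vec_of_list zs \<in> carrier_vec n" by (rule carrier_vecI) (simp add: l)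
  have dm: "dim_vec (M *\<^sub>v vec_of_list zs) = n" using M by simp
  have "scalar_prod (vec_of_list zs) (M *\<^sub>v vec_of_list zs) = (\<Sum>i<n. vec_of_list zs $ i * (M *\<^sub>v vec_of_list zs) $ i)"
    unfolding scalar_prod_def dm lessThan_atLeast0 ..
  also have "\<dots> = (\<Sum>i<n. zs ! i * (\<Sum>j<n. M $$ (i,j) * zs ! j))"
    by (intro sum.cong refl) (simp only: mult_vec_entry[OF M v] vec_of_list_index lessThan_iff)
  also have "\<dots> = qf n M (\<lambda>i. zs ! i)"
    unfolding qf_def by (simp add: sum_distrib_left mult.assoc)
  finally show ?thesis .
qed

lemma qf_minus_one:
  assumes P: "P \<in> carrier_mat n n"
  shows "qf n (P - 1\<^sub>m n) z = qf n P z - (\<Sum>i<n. (z i)\<^sup>2)"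
proof -
  have "qf n (P - 1\<^sub>m n) z = (\<Sum>i<n. \<Sum>j<n. z i * P $$ (i,j) * z j - (if i = j then z i * z j else 0))"
    unfolding qf_def using P by (intro sum.cong refl) (auto simp: algebra_simps)
  also have "\<dots> = qf n P z - (\<Sum>i<n. (z i)\<^sup>2)"
    unfolding qf_def by (simp add: sum_subtractf power2_eq_square)
  finally show ?thesis .
qed

lemma gcd_eq:
  assumes R: "R \<in> carrier_mat n n" and inv: "mat_inverse R = Some P" and l: "length zs = n"
  shows "gauss_copula_density R zs = det R powr (-1/2) * exp (- (1/2) * (qf n P (\<lambda>i. zs ! i) - (\<Sum>i<n. (zs ! i)\<^sup>2)))"
proof -
  have P: "P \<in> carrier_mat n n" using mat_inverse(2)[OF R inv] by simp
  have "P - 1\<^sub>m n \<in> carrier_mat n n" by (rule minus_carrier_mat) simp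
  from sp_qf[OF this l] show ?thesis
    unfolding gauss_copula_density_def Let_def inv l by (simp add: qf_minus_one[OF P])
qed

lemma powr_half_lemma: fixes s a :: real assumes "0 < s" "0 < a" shows "(s / a) powr (-1/2) = s powr (-1/2) * sqrt a"
proof -
  have "(s / a) powr (-1/2) = s powr (-1/2) / a powr (-1/2)"
    using assms by (intro powr_divide)
  also have "a powr (-1/2) = a powr (-(1/2))" by (simp only: minus_divide_left)
  also have "\<dots> = inverse (a powr (1/2))" by (rule powr_minus)
  also have "a powr (1/2) = sqrt a" using assms by (simp add: powr_half_sqrt)
  finally show ?thesis by (simp only: divide_inverse inverse_inverse_eq)
qed

lemma copula_marg:
  assumes pd: "pd (Suc k) R" and m: "m < Suc k" and inv: "mat_inverse R = Some P"
    and l: "length zs = Suc k" and l': "length zs' = k"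
    and zz: "\<And>i. i < k \<Longrightarrow> zs' ! i = zs ! insert_index m i"
  shows "gauss_copula_density R zs = gauss_copula_density (mat_delete R m m) zs' *
     (sqrt (P $$ (m,m)) * exp (- (P $$ (m,m) * (zs ! m + (\<Sum>j<k. P $$ (m, insert_index m j) * zs' ! j) / P $$ (m,m))\<^sup>2 - (zs ! m)\<^sup>2) / 2))"
proof -
  let ?ins = "insert_index m"
  have R: "R \<in> carrier_mat (Suc k) (Suc k)" using pd by (simp add: pd_def)
  have PP: "R * P = 1\<^sub>m (Suc k)" "P * R = 1\<^sub>m (Suc k)" "P \<in> carrier_mat (Suc k) (Suc k)"
    using mat_inverse(2)[OF R inv] by auto
  define a where "a = P $$ (m,m)"
  define S where "S = mat_delete R m m"
  have a: "0 < a" unfolding a_def by (rule inv_diag_pos[OF pd PP(1) PP(3) m])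
  have S: "S \<in> carrier_mat k k" unfolding S_def using mat_delete_carrier[OF R] by simp
  have Sinv: "mat_inverse S = Some (schurQ P k m)"
    unfolding S_def using schurQ_inverse[OF pd PP(2) PP(3) m] a a_def by simp
  have dS: "0 < det S" unfolding S_def by (rule pd_det_pos[OF pd_delete[OF pd m]])
  have dR: "det S = det R * a" unfolding S_def a_def by (rule inv_det[OF R PP(2) PP(3) m])
  have Psym: "\<And>i j. i < Suc k \<Longrightarrow> j < Suc k \<Longrightarrow> P $$ (i,j) = P $$ (j,i)"
    by (rule inv_sym[OF pd PP])
  define c where "c = (\<Sum>j<k. P $$ (m, ?ins j) * zs' ! j) / a"
  have q: "qf (Suc k) P (\<lambda>i. zs ! i) = a * (zs ! m + c)\<^sup>2 + qf k (schurQ P k m) (\<lambda>i. zs' ! i)"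
  proof -
    have "qf (Suc k) P (\<lambda>i. zs ! i) = a * (zs ! m + c)\<^sup>2 + qf k (schurQ P k m) (\<lambda>i. zs ! ?ins i)"
      using qf_schur[OF Psym m, of "\<lambda>i. zs ! i"] a zz unfolding a_def c_def by simp
    also have "qf k (schurQ P k m) (\<lambda>i. zs ! ?ins i) = qf k (schurQ P k m) (\<lambda>i. zs' ! i)"
      unfolding qf_def using zz by simp
    finally show ?thesis .
  qed
  have sq: "(\<Sum>i<Suc k. (zs ! i)\<^sup>2) = (zs ! m)\<^sup>2 + (\<Sum>i<k. (zs' ! i)\<^sup>2)"
    unfolding sum_ins[OF m] using zz by simp
  have dpow: "det R powr (-1/2) = det S powr (-1/2) * sqrt a"
  proof -
    have "det R = det S / a" using dR a by (simp add: field_simps)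
    thus ?thesis using powr_half_lemma[OF dS a] by simp
  qed
  have "gauss_copula_density R zs = det R powr (-1/2) * exp (- (1/2) * (qf (Suc k) P (\<lambda>i. zs ! i) - (\<Sum>i<Suc k. (zs ! i)\<^sup>2)))"
    by (rule gcd_eq[OF R inv l])
  also have "\<dots> = (det S powr (-1/2) * exp (- (1/2) * (qf k (schurQ P k m) (\<lambda>i. zs' ! i) - (\<Sum>i<k. (zs' ! i)\<^sup>2))))
       * (sqrt a * exp (- (a * (zs ! m + c)\<^sup>2 - (zs ! m)\<^sup>2) / 2))"
  proof -
    have ex: "exp (- (1/2) * (A + Q - (w + T))) = exp (- (1/2) * (Q - T)) * exp (- (A - w) / 2)"
      for A Q w T :: real
      by (simp only: exp_add[symmetric]) (rule arg_cong[where f=exp], simp add: field_simps)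
    show ?thesis unfolding q sq dpow ex by (simp only: mult_ac)
  qed
  also have "det S powr (-1/2) * exp (- (1/2) * (qf k (schurQ P k m) (\<lambda>i. zs' ! i) - (\<Sum>i<k. (zs' ! i)\<^sup>2)))
      = gauss_copula_density S zs'"
    by (rule gcd_eq[OF S Sinv l', symmetric])
  finally show ?thesis unfolding S_def a_def c_def .
qed


lemma corr_pd:
  fixes vs :: "real vec list"
  assumes H: "0 < H" and dims: "\<And>i. i < length vs \<Longrightarrow> dim_vec (vs ! i) = H"
    and bnd: "\<And>i l. i < length vs \<Longrightarrow> l < H \<Longrightarrow> \<bar>vs ! i $ l\<bar> < 1"
  shows "pd (length vs) (corr_mat H vs)"
proof -
  let ?n = "length vs"
  let ?R = "corr_mat H vs"
  define G where "G i j = (\<Sum>l<H. vs ! i $ l * vs ! j $ l)" for i j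
  define d where "d i = 1 - G i i / H" for i
  have sp: "scalar_prod (vs ! i) (vs ! j) = G i j" if "j < ?n" for i j
    unfolding scalar_prod_def G_def using dims[OF that] by (simp add: lessThan_atLeast0)
  have Rij: "?R $$ (i,j) = G i j / H + (if i = j then d i else 0)" if "i < ?n" "j < ?n" for i j
    using that sp[OF that(2)] unfolding corr_mat_def d_def by simp
  have Gsym: "G i j = G j i" for i j unfolding G_def by (simp add: mult.commute)
  have dpos: "0 < d i" if "i < ?n" for i
  proof -
    have "G i i = (\<Sum>l<H. (vs ! i $ l)\<^sup>2)" unfolding G_def by (simp add: power2_eq_square)
    also have "\<dots> < (\<Sum>l<H. 1)"
      using H bnd[OF that] by (intro sum_strict_mono) (auto simp: abs_square_less_1)
    finally have "G i i < H" by simp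
    thus ?thesis unfolding d_def using H by (simp add: field_simps)
  qed
  have sq: "(\<Sum>i<?n. \<Sum>j<?n. x i * G i j * x j) = (\<Sum>l<H. (\<Sum>i<?n. x i * vs ! i $ l)\<^sup>2)" for x
  proof -
    have "(\<Sum>l<H. (\<Sum>i<?n. x i * vs ! i $ l)\<^sup>2) = (\<Sum>l<H. \<Sum>i<?n. \<Sum>j<?n. x i * vs ! i $ l * (x j * vs ! j $ l))"
      by (simp add: power2_eq_square sum_product)
    also have "\<dots> = (\<Sum>i<?n. \<Sum>l<H. \<Sum>j<?n. x i * vs ! i $ l * (x j * vs ! j $ l))"
      by (rule sum.swap)
    also have "\<dots> = (\<Sum>i<?n. \<Sum>j<?n. \<Sum>l<H. x i * vs ! i $ l * (x j * vs ! j $ l))"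
      by (intro sum.cong refl sum.swap)
    also have "\<dots> = (\<Sum>i<?n. \<Sum>j<?n. x i * G i j * x j)"
      unfolding G_def by (simp add: sum_distrib_left sum_distrib_right mult_ac)
    finally show ?thesis by simp
  qed
  show ?thesis unfolding pd_def
  proof (intro conjI allI impI)
    show "?R \<in> carrier_mat ?n ?n" by (simp add: corr_mat_def)
  next
    fix i j assume "i < ?n" "j < ?n"
    thus "?R $$ (i,j) = ?R $$ (j,i)" using Rij Gsym by simp
  next
    fix x :: "nat \<Rightarrow> real" assume "\<exists>i<?n. x i \<noteq> 0"
    then obtain i0 where i0: "i0 < ?n" "x i0 \<noteq> 0" by auto
    have "qf ?n ?R x = (\<Sum>i<?n. \<Sum>j<?n. x i * G i j * x j / H + (if i = j then x i * d i * x j else 0))"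
      unfolding qf_def by (intro sum.cong refl) (simp add: Rij algebra_simps)
    also have "\<dots> = (\<Sum>i<?n. \<Sum>j<?n. x i * G i j * x j) / H + (\<Sum>i<?n. d i * (x i)\<^sup>2)"
      by (simp add: sum.distrib sum_divide_distrib power2_eq_square mult_ac cong: if_cong)
    finally have e: "qf ?n ?R x = (\<Sum>l<H. (\<Sum>i<?n. x i * vs ! i $ l)\<^sup>2) / H + (\<Sum>i<?n. d i * (x i)\<^sup>2)"
      unfolding sq .
    have "0 \<le> (\<Sum>l<H. (\<Sum>i<?n. x i * vs ! i $ l)\<^sup>2) / H" using H by (intro divide_nonneg_pos sum_nonneg) auto
    moreover have "0 < (\<Sum>i<?n. d i * (x i)\<^sup>2)"
    proof (rule sum_pos2[of _ i0])
      show "0 < d i0 * (x i0)\<^sup>2" using dpos[OF i0(1)] i0(2) by simp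
      show "0 \<le> d i * (x i)\<^sup>2" if "i \<in> {..<?n}" for i
        using dpos[of i] that by (simp add: less_imp_le)
    qed (use i0 in auto)
    ultimately show "0 < qf ?n ?R x" unfolding e by simp
  qed
qed


lemma del_nth_length: "m < length xs \<Longrightarrow> length (del_nth m xs) = length xs - 1"
  by (simp add: del_nth_def)

lemma del_nth_nth:
  assumes "m < length xs" "i < length xs - 1"
  shows "del_nth m xs ! i = xs ! insert_index m i"
  using assms by (auto simp: del_nth_def nth_append insert_index_def min_def)

lemma del_nth_map: "del_nth m (map f xs) = map f (del_nth m xs)"
  by (simp add: del_nth_def take_map drop_map)

lemma corr_del:
  assumes "m < length vs"
  shows "corr_mat H (del_nth m vs) = mat_delete (corr_mat H vs) m m"
proof -
  obtain k where k: "length vs = Suc k" using assms by (cases "length vs") auto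
  have C: "corr_mat H vs \<in> carrier_mat (Suc k) (Suc k)" using k by (simp add: corr_mat_def)
  have m: "m < Suc k" using assms k by simp
  show ?thesis
  proof (rule eq_matI)
    fix i j assume "i < dim_row (mat_delete (corr_mat H vs) m m)" "j < dim_col (mat_delete (corr_mat H vs) m m)"
    hence ij: "i < k" "j < k" using C by auto
    have "mat_delete (corr_mat H vs) m m $$ (i,j) = corr_mat H vs $$ (insert_index m i, insert_index m j)"
      using mat_delete_index[OF C m m ij] by simp
    also have "\<dots> = corr_mat H (del_nth m vs) $$ (i,j)"
      using ij k assms ins_lt[OF m] by (simp add: corr_mat_def del_nth_length del_nth_nth ins_inj)
    finally show "corr_mat H (del_nth m vs) $$ (i,j) = mat_delete (corr_mat H vs) m m $$ (i,j)" by simp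
  qed (use C assms k in \<open>auto simp: corr_mat_def del_nth_length\<close>)
qed

lemma emb_block_dim: "dim_vec (emb_block Proj phi htilde D' k t) = D'"
  by (simp add: emb_block_def)

theorem propositionA2:
  fixes F f :: "real \<Rightarrow> 'p \<Rightarrow> real"
    and theta :: "real vec \<Rightarrow> 'p"
    and g Proj :: "real vec \<Rightarrow> real vec"
    and phi :: "real \<Rightarrow> real vec"
    and htilde :: "real vec"
    and H K D' k m :: nat
    and ts ys :: "real list"
  assumes F_deriv: "\<And>th y. ((\<lambda>u. F u th) has_real_derivative f y th) (at y)"
    and f_cont: "\<And>th. continuous_on UNIV (\<lambda>y. f y th)"
    and F_mono: "\<And>th. strict_mono (\<lambda>y. F y th)"
    and F_range: "\<And>th y. 0 < F y th \<and> F y th < 1"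
    and F_bot: "\<And>th. ((\<lambda>y. F y th) \<longlongrightarrow> 0) at_bot"
    and F_top: "\<And>th. ((\<lambda>y. F y th) \<longlongrightarrow> 1) at_top"
    and H_pos: "0 < H"
    and g_dim: "\<And>x. dim_vec x = D' \<Longrightarrow> dim_vec (g x) = H"
    and Proj_dim: "\<And>x. dim_vec (Proj x) = K * D'"
    and k_lt: "k < K"
    and len: "length ys = length ts"
    and m_lt: "m < length ts"
  shows "has_bochner_integral lborel
           (\<lambda>y. p_leaf F f theta g H Proj phi htilde D' k ts (ys[m := y]))
           (p_leaf F f theta g H Proj phi htilde D' k (del_nth m ts) (del_nth m ys))"
proof -
  obtain n where n: "length ts = Suc n" using m_lt by (cases "length ts") auto
  have m: "m < Suc n" using m_lt n by simp
  let ?ins = "insert_index m"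
  have neq: "\<And>i. m \<noteq> ?ins i" by (metis insert_index_exclude)
  define es where "es = map (emb_block Proj phi htilde D' k) ts"
  define ths where "ths = map theta es"
  define vs where "vs = map (\<lambda>e. map_vec tanh (g e)) es"
  define R where "R = corr_mat H vs"
  define S where "S = mat_delete R m m"
  define th where "th = ths ! m"
  have les: "length es = Suc n" "length ths = Suc n" "length vs = Suc n" "length ys = Suc n"
    using n len by (auto simp: es_def ths_def vs_def)
  have pdR: "pd (Suc n) R"
    unfolding R_def using corr_pd[of H vs] H_pos les
    by (auto simp: vs_def es_def emb_block_dim g_dim abs_less_iff tanh_real_lt_1 tanh_real_gt_neg1)
  obtain P where inv: "mat_inverse R = Some P" using pd_inv[OF pdR] by metis
  have R: "R \<in> carrier_mat (Suc n) (Suc n)" using pdR by (simp add: pd_def)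
  have a: "0 < P $$ (m,m)"
    using inv_diag_pos[OF pdR _ _ m] mat_inverse(2)[OF R inv] by auto
  define zs' where "zs' = map2 (\<lambda>y th. Phi_inv (F y th)) (del_nth m ys) (del_nth m ths)"
  define C where "C = (\<Prod>i<n. f (del_nth m ys ! i) (del_nth m ths ! i)) * gauss_copula_density S zs'"
  define c where "c = (\<Sum>j<n. P $$ (m, ?ins j) * zs' ! j) / P $$ (m,m)"
  have lz': "length zs' = n" using les m by (simp add: zs'_def del_nth_length)
  have zs'i: "zs' ! i = Phi_inv (F (ys ! ?ins i) (ths ! ?ins i))" if "i < n" for i
    using that les m by (simp add: zs'_def del_nth_length del_nth_nth)
  have rhs: "p_leaf F f theta g H Proj phi htilde D' k (del_nth m ts) (del_nth m ys) = C"
  proof -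
    have "map (emb_block Proj phi htilde D' k) (del_nth m ts) = del_nth m es"
      by (simp add: es_def del_nth_map)
    moreover have "corr_mat H (del_nth m vs) = S"
      unfolding S_def R_def using les m by (simp add: corr_del)
    ultimately show ?thesis
      unfolding p_leaf_def leaf_density_def C_def Let_def zs'_def
      using les m by (simp add: del_nth_map[symmetric] ths_def vs_def del_nth_length)
  qed
  have lhs: "p_leaf F f theta g H Proj phi htilde D' k ts (ys[m := y]) =
     C * (f y th * sqrt (P $$ (m,m)) * exp (- (P $$ (m,m) * (Phi_inv (F y th) + c)\<^sup>2 - (Phi_inv (F y th))\<^sup>2) / 2))"
    for y
  proof -
    define zs where "zs = map2 (\<lambda>y th. Phi_inv (F y th)) (ys[m := y]) ths"
    have lz: "length zs = Suc n" using les by (simp add: zs_def)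
    have zsm: "zs ! m = Phi_inv (F y th)" using les m by (simp add: zs_def th_def)
    have zz: "zs' ! i = zs ! ?ins i" if "i < n" for i
    proof -
      have "m \<noteq> ?ins i" by (metis insert_index_exclude)
      thus ?thesis using zs'i[OF that] les m ins_lt[OF m that] by (simp add: zs_def nth_list_update_neq[OF \<open>m \<noteq> ?ins i\<close>])
    qed
    have g: "gauss_copula_density R zs = gauss_copula_density S zs' *
       (sqrt (P $$ (m,m)) * exp (- (P $$ (m,m) * (Phi_inv (F y th) + c)\<^sup>2 - (Phi_inv (F y th))\<^sup>2) / 2))"
      using copula_marg[OF pdR m inv lz lz' zz] unfolding S_def c_def zsm by simp
    have p: "(\<Prod>i<Suc n. f (ys[m := y] ! i) (ths ! i)) = f y th * (\<Prod>i<n. f (del_nth m ys ! i) (del_nth m ths ! i))"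
      unfolding prod_ins[OF m] using les m ins_lt[OF m]
      by (simp add: th_def del_nth_nth nth_list_update_neq[OF neq])
    show ?thesis
      unfolding p_leaf_def leaf_density_def Let_def es_def[symmetric] ths_def[symmetric] vs_def[symmetric]
        R_def[symmetric] zs_def[symmetric]
      using les p g unfolding C_def by (simp add: mult_ac)
  qed
  have "has_bochner_integral lborel
     (\<lambda>y. f y th * sqrt (P $$ (m,m)) * exp (- (P $$ (m,m) * (Phi_inv (F y th) + c)\<^sup>2 - (Phi_inv (F y th))\<^sup>2) / 2)) 1"
    by (rule gauss_int[OF F_deriv f_cont F_mono F_range F_bot F_top a])
  hence "has_bochner_integral lborel
     (\<lambda>y. C * (f y th * sqrt (P $$ (m,m)) * exp (- (P $$ (m,m) * (Phi_inv (F y th) + c)\<^sup>2 - (Phi_inv (F y th))\<^sup>2) / 2))) (C * 1)"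
    by (rule has_bochner_integral_mult_right)
  thus ?thesis unfolding lhs rhs by simp
qed

end
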